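(* The graphs $C_3+(P_2\cup P_1)$ and $P_3+P_3$ are of class $\mathcal C_0$.
   Context: All graphs are finite, simple and undirected. $C_n$ and $P_n$ denote the cycle and the path on $n$ vertices; $G_1\cup G_2$ is the disjoint union. The join $G+H$ is obtained from vertex-disjoint copies of $G$ and $H$ by adding all edges between $V(G)$ and $V(H)$. A drawing is 1-planar if each edge is crossed at most once (adjacent edges never cross, no edge crosses itself); a graph is 1-planar if it has such a drawing. For a 1-planar drawing $D$, $D^\times$ is the plane graph obtained by turning each crossing into a new degree-4 vertex (a false vertex); $N_{D^\times}(c)$ is the neighbour set of a false vertex $c$. A 1-planar graph is of class $\mathcal C_0$ if it has a 1-planar drawing $D$ with $|N_{D^\times}(c_1)\cap N_{D^\times}(c_2)|=0$ for all distinct false vertices $c_1,c_2$. *)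

theory Defs
  imports "HOL-Analysis.Analysis"
begin

text \<open>A simple graph is given by a vertex set V and an edge set E of 2-element subsets of V.\<close>

definition crosses :: "('a set \<Rightarrow> real \<Rightarrow> complex) \<Rightarrow> 'a set \<Rightarrow> 'a set \<Rightarrow> bool" where
  "crosses curve e f \<longleftrightarrow> e \<inter> f = {} \<and> path_image (curve e) \<inter> path_image (curve f) \<noteq> {}"

definition one_planar_drawing ::
  "'a set \<Rightarrow> 'a set set \<Rightarrow> ('a \<Rightarrow> complex) \<Rightarrow> ('a set \<Rightarrow> real \<Rightarrow> complex) \<Rightarrow> bool" where
  "one_planar_drawing V E pos curve \<longleftrightarrow>
     inj_on pos V \<and>
     (\<forall>e\<in>E. arc (curve e) \<and> {pathstart (curve e), pathfinish (curve e)} = pos ` e \<and>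
             path_image (curve e) \<inter> pos ` V = pos ` e) \<and>
     \<comment> \<open>adjacent edges never cross: they meet only in their common end vertex\<close>
     (\<forall>e\<in>E. \<forall>f\<in>E. e \<noteq> f \<and> e \<inter> f \<noteq> {} \<longrightarrow>
        path_image (curve e) \<inter> path_image (curve f) = pos ` (e \<inter> f)) \<and>
     \<comment> \<open>two independent edges meet in at most one point (a crossing)\<close>
     (\<forall>e\<in>E. \<forall>f\<in>E. e \<inter> f = {} \<longrightarrow>
        finite (path_image (curve e) \<inter> path_image (curve f)) \<and>
        card (path_image (curve e) \<inter> path_image (curve f)) \<le> 1) \<and>
     \<comment> \<open>each edge is crossed at most once\<close>
     (\<forall>e\<in>E. card {f\<in>E. crosses curve e f} \<le> 1)"

text \<open>A crossing of edges e and f becomes a false vertex of degree 4 whose neighbours in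
  D^x are exactly the end vertices of e and f, i.e. the set e \<union> f.  Distinct false
  vertices correspond to distinct unordered pairs of crossing edges.\<close>

definition class_C0 :: "'a set \<Rightarrow> 'a set set \<Rightarrow> bool" where
  "class_C0 V E \<longleftrightarrow>
     (\<exists>pos curve. one_planar_drawing V E pos curve \<and>
        (\<forall>e1\<in>E. \<forall>f1\<in>E. \<forall>e2\<in>E. \<forall>f2\<in>E.
           crosses curve e1 f1 \<and> crosses curve e2 f2 \<and> {e1, f1} \<noteq> {e2, f2} \<longrightarrow>
           (e1 \<union> f1) \<inter> (e2 \<union> f2) = {}))"

definition join_edges :: "'a set \<Rightarrow> 'a set set \<Rightarrow> 'a set \<Rightarrow> 'a set set \<Rightarrow> 'a set set" where
  "join_edges V1 E1 V2 E2 = E1 \<union> E2 \<union> {{u, v} | u v. u \<in> V1 \<and> v \<in> V2}"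

text \<open>C_3 on {0,1,2}; P_2 \<union> P_1 on {3,4,5}; P_3 on {0,1,2} and on {3,4,5}.\<close>
definition C3_edges :: "nat set set" where "C3_edges = {{0,1},{1,2},{0,2}}"
definition P2_P1_edges :: "nat set set" where "P2_P1_edges = {{3,4}}"
definition P3_edges_a :: "nat set set" where "P3_edges_a = {{0,1},{1,2}}"
definition P3_edges_b :: "nat set set" where "P3_edges_b = {{3,4},{4,5}}"

end

theory Submission
  imports Defs
begin


definition cr :: "complex \<Rightarrow> complex \<Rightarrow> complex \<Rightarrow> real" where
  "cr a b c = Re (b-a) * Im (c-a) - Im (b-a) * Re (c-a)"

lemma seg_param: assumes "z \<in> closed_segment a b"
  shows "\<exists>u. 0 \<le> u \<and> u \<le> 1 \<and> z = a + u *\<^sub>R (b - a)"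
proof -
  from assms obtain u where "0 \<le> u" "u \<le> 1" "z = (1 - u) *\<^sub>R a + u *\<^sub>R b"
    by (auto simp: in_segment)
  then show ?thesis by (intro exI[of _ u]) (simp add: algebra_simps)
qed

lemma cr_lin: "cr a b (c + u *\<^sub>R (d - c)) = (1 - u) * cr a b c + u * cr a b d"
  by (simp add: cr_def algebra_simps)

lemma on_seg: "z \<in> closed_segment a b \<Longrightarrow> cr a b z = 0"
  using cr_lin[of a b a u b for u] seg_param[of z a b] by (auto simp: cr_def)

lemma cr_swap: "cr b a c = - cr a b c"
  by (simp add: cr_def algebra_simps)

lemma sep_pos: assumes "cr a b c > 0" "cr a b d > 0"
  shows "closed_segment a b \<inter> closed_segment c d = {}"
proof (rule ccontr)
  assume "closed_segment a b \<inter> closed_segment c d \<noteq> {}"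
  then obtain z where z: "z \<in> closed_segment a b" "z \<in> closed_segment c d" by auto
  from seg_param[OF z(2)] obtain u where u: "0 \<le> u" "u \<le> 1" "z = c + u *\<^sub>R (d - c)" by auto
  have "cr a b z = (1 - u) * cr a b c + u * cr a b d" using u cr_lin by simp
  moreover have "(1 - u) * cr a b c + u * cr a b d > 0"
  proof (cases "u = 1")
    case True then show ?thesis using assms by simp
  next
    case False
    then have "(1 - u) * cr a b c > 0" using u assms by simp
    moreover have "u * cr a b d \<ge> 0" using u assms by simp
    ultimately show ?thesis by linarith
  qed
  ultimately show False using on_seg[OF z(1)] by simp
qed

lemma sep_neg: assumes "cr a b c < 0" "cr a b d < 0"
  shows "closed_segment a b \<inter> closed_segment c d = {}"
proof -
  have "closed_segment b a \<inter> closed_segment c d = {}"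
    by (rule sep_pos) (simp_all add: cr_swap[of b a] assms)
  then show ?thesis by (simp add: closed_segment_commute[of b a])
qed

lemma adj: assumes "cr a b c \<noteq> 0"
  shows "closed_segment a b \<inter> closed_segment a c = {a}"
proof
  show "{a} \<subseteq> closed_segment a b \<inter> closed_segment a c" by auto
  show "closed_segment a b \<inter> closed_segment a c \<subseteq> {a}"
  proof
    fix z assume z: "z \<in> closed_segment a b \<inter> closed_segment a c"
    from seg_param[of z a c] z obtain t where t: "z = a + t *\<^sub>R (c - a)" by auto
    have "cr a b z = t * cr a b c" using cr_lin[of a b a t c] t by (simp add: cr_def)
    then have "t = 0" using on_seg[of z a b] z assms by auto
    then show "z \<in> {a}" using t by simp
  qed
qed

lemma vert_off: "cr a b v \<noteq> 0 \<Longrightarrow> v \<notin> closed_segment a b"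
  using on_seg by blast

lemma atmost1:
  assumes "Re (b-a) * Im (d-c) - Im (b-a) * Re (d-c) \<noteq> 0"
    and z1: "z1 \<in> closed_segment a b" "z1 \<in> closed_segment c d"
    and z2: "z2 \<in> closed_segment a b" "z2 \<in> closed_segment c d"
  shows "z1 = z2"
proof -
  obtain s1 where s1: "z1 = a + s1 *\<^sub>R (b - a)" using seg_param[OF z1(1)] by auto
  obtain s2 where s2: "z2 = a + s2 *\<^sub>R (b - a)" using seg_param[OF z2(1)] by auto
  obtain t1 where t1: "z1 = c + t1 *\<^sub>R (d - c)" using seg_param[OF z1(2)] by auto
  obtain t2 where t2: "z2 = c + t2 *\<^sub>R (d - c)" using seg_param[OF z2(2)] by auto
  have "(s1 - s2) *\<^sub>R (b - a) = (a + s1 *\<^sub>R (b - a)) - (a + s2 *\<^sub>R (b - a))"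
    by (simp add: algebra_simps)
  also have "\<dots> = (c + t1 *\<^sub>R (d - c)) - (c + t2 *\<^sub>R (d - c))"
    using s1 s2 t1 t2 by simp
  also have "\<dots> = (t1 - t2) *\<^sub>R (d - c)" by (simp add: algebra_simps)
  finally have e: "(s1 - s2) *\<^sub>R (b - a) = (t1 - t2) *\<^sub>R (d - c)" .
  have r: "(s1 - s2) * Re (b - a) = (t1 - t2) * Re (d - c)"
    using arg_cong[OF e, of Re] by simp
  have i: "(s1 - s2) * Im (b - a) = (t1 - t2) * Im (d - c)"
    using arg_cong[OF e, of Im] by simp
  have "(t1 - t2) * (Re (b-a) * Im (d-c) - Im (b-a) * Re (d-c)) =
        Re (b-a) * ((t1 - t2) * Im (d - c)) - Im (b-a) * ((t1 - t2) * Re (d - c))"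
    by (simp add: algebra_simps)
  also have "\<dots> = 0" by (simp only: r[symmetric] i[symmetric]) (simp add: algebra_simps)
  finally have "t1 = t2" using assms by simp
  then show ?thesis using t1 t2 by simp
qed


definition curveP :: "(nat \<Rightarrow> complex) \<Rightarrow> nat set \<Rightarrow> real \<Rightarrow> complex" where
  "curveP pos e = linepath (pos (Min e)) (pos (Max e))"

definition sepT :: "(nat \<Rightarrow> complex) \<Rightarrow> nat \<Rightarrow> nat \<Rightarrow> nat \<Rightarrow> nat \<Rightarrow> bool" where
  "sepT pos a b c d \<longleftrightarrow>
     (cr (pos a) (pos b) (pos c) > 0 \<and> cr (pos a) (pos b) (pos d) > 0) \<or>
     (cr (pos a) (pos b) (pos c) < 0 \<and> cr (pos a) (pos b) (pos d) < 0) \<or>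
     (cr (pos c) (pos d) (pos a) > 0 \<and> cr (pos c) (pos d) (pos b) > 0) \<or>
     (cr (pos c) (pos d) (pos a) < 0 \<and> cr (pos c) (pos d) (pos b) < 0)"

lemma sepT_disj: assumes "sepT pos a b c d"
  shows "closed_segment (pos a) (pos b) \<inter> closed_segment (pos c) (pos d) = {}"
  using assms unfolding sepT_def
  by (metis Int_commute sep_pos sep_neg)

lemma path_image_curveP:
  assumes "x \<noteq> y"
  shows "path_image (curveP pos {x, y}) = closed_segment (pos x) (pos y)"
proof (cases "x < y")
  case True then show ?thesis by (simp add: curveP_def)
next
  case False
  then have "y < x" using assms by simp
  then show ?thesis by (simp add: curveP_def insert_commute closed_segment_commute)
qed

lemma le1: assumes "\<forall>x\<in>S. \<forall>y\<in>S. x = y" shows "finite S \<and> card S \<le> 1"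
proof (cases "S = {}")
  case True then show ?thesis by simp
next
  case False
  then obtain z where "z \<in> S" by auto
  then have "S = {z}" using assms by auto
  then show ?thesis by simp
qed

lemma main:
  fixes pos :: "nat \<Rightarrow> complex" and P :: "(nat \<times> nat) list"
  assumes inj: "inj_on pos V"
    and PV: "\<forall>(u,v)\<in>set P. u < v \<and> u \<in> V \<and> v \<in> V"
    and nc: "\<forall>u\<in>V. \<forall>v\<in>V. \<forall>w\<in>V. u \<noteq> v \<and> u \<noteq> w \<and> v \<noteq> w \<longrightarrow> cr (pos u) (pos v) (pos w) \<noteq> 0"
    and p0: "(aa, bb) \<in> set P" "(cc, dd) \<in> set P"
    and dd0: "aa \<noteq> cc" "aa \<noteq> dd" "bb \<noteq> cc" "bb \<noteq> dd"
    and meet: "closed_segment (pos aa) (pos bb) \<inter> closed_segment (pos cc) (pos dd) \<noteq> {}"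
    and dir: "Re (pos bb - pos aa) * Im (pos dd - pos cc) - Im (pos bb - pos aa) * Re (pos dd - pos cc) \<noteq> 0"
    and other: "\<forall>(a,b)\<in>set P. \<forall>(c,d)\<in>set P. a \<noteq> c \<and> a \<noteq> d \<and> b \<noteq> c \<and> b \<noteq> d \<longrightarrow>
         sepT pos a b c d \<or> (a = aa \<and> b = bb \<and> c = cc \<and> d = dd) \<or> (a = cc \<and> b = dd \<and> c = aa \<and> d = bb)"
  shows "class_C0 V ((\<lambda>(u,v). {u,v}) ` set P)"
proof -
  define E where "E = (\<lambda>(u,v). {u,v}) ` set P"
  define curve where "curve = curveP pos"
  have edge: "\<exists>u v. (u, v) \<in> set P \<and> e = {u, v} \<and> u < v \<and> u \<in> V \<and> v \<in> V" if "e \<in> E" for e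
  proof -
    from that obtain a b where ab: "(a,b) \<in> set P" "e = {a,b}" unfolding E_def by auto
    then have "a < b \<and> a \<in> V \<and> b \<in> V" using PV by auto
    then show ?thesis using ab by blast
  qed
  have aabb: "aa < bb" "aa \<in> V" "bb \<in> V" and ccdd: "cc < dd" "cc \<in> V" "dd \<in> V"
    using p0 PV by auto
  have pi: "path_image (curve {x, y}) = closed_segment (pos x) (pos y)" if "x \<noteq> y" for x y
    using path_image_curveP[OF that] unfolding curve_def by simp
  have dis: "closed_segment (pos a) (pos b) \<inter> closed_segment (pos c) (pos d) = {} \<or>
     ({a,b} = {aa,bb} \<and> {c,d} = {cc,dd}) \<or> ({a,b} = {cc,dd} \<and> {c,d} = {aa,bb})"
    if "(a,b) \<in> set P" "(c,d) \<in> set P" "a \<noteq> c" "a \<noteq> d" "b \<noteq> c" "b \<noteq> d" for a b c d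
    using other that sepT_disj by fastforce
  have S1: "\<forall>x\<in>closed_segment (pos aa) (pos bb) \<inter> closed_segment (pos cc) (pos dd).
      \<forall>y\<in>closed_segment (pos aa) (pos bb) \<inter> closed_segment (pos cc) (pos dd). x = y"
    using atmost1[OF dir] by blast
  have E0: "{aa,bb} \<in> E" "{cc,dd} \<in> E" using p0 unfolding E_def by force+
  have ne: "{aa,bb} \<noteq> {cc,dd}" using dd0 by auto
  have ccx: "(e = {aa,bb} \<and> f = {cc,dd}) \<or> (e = {cc,dd} \<and> f = {aa,bb})"
    if efc: "e \<in> E" "f \<in> E" "crosses curve e f" for e f
  proof -
    obtain a b where ab: "(a,b) \<in> set P" "e = {a,b}" "a < b" using edge[OF efc(1)] by auto
    obtain c d where cd: "(c,d) \<in> set P" "f = {c,d}" "c < d" using edge[OF efc(2)] by auto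
    have "e \<inter> f = {}" "path_image (curve e) \<inter> path_image (curve f) \<noteq> {}"
      using efc(3) unfolding crosses_def by auto
    then have "a \<noteq> c" "a \<noteq> d" "b \<noteq> c" "b \<noteq> d"
      and "closed_segment (pos a) (pos b) \<inter> closed_segment (pos c) (pos d) \<noteq> {}"
      using ab cd pi by auto
    then show ?thesis using dis[OF ab(1) cd(1)] ab cd by auto
  qed
  have "one_planar_drawing V E pos curve"
    unfolding one_planar_drawing_def
  proof (intro conjI ballI impI allI)
    show "inj_on pos V" by (rule inj)
  next
    fix e assume "e \<in> E"
    then obtain u v where uv: "e = {u,v}" "u < v" "u \<in> V" "v \<in> V" using edge by blast
    have cu: "curve e = linepath (pos u) (pos v)" using uv by (simp add: curve_def curveP_def)
    have "pos u \<noteq> pos v" using inj uv by (auto dest: inj_onD)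
    then show "arc (curve e)" using cu by simp
    show "{pathstart (curve e), pathfinish (curve e)} = pos ` e" using cu uv by simp
    have "closed_segment (pos u) (pos v) \<inter> pos ` V = pos ` e"
    proof
      show "pos ` e \<subseteq> closed_segment (pos u) (pos v) \<inter> pos ` V" using uv by auto
      show "closed_segment (pos u) (pos v) \<inter> pos ` V \<subseteq> pos ` e"
      proof
        fix z assume z: "z \<in> closed_segment (pos u) (pos v) \<inter> pos ` V"
        then obtain w where w: "w \<in> V" "z = pos w" by auto
        show "z \<in> pos ` e"
        proof (rule ccontr)
          assume "z \<notin> pos ` e"
          then have "w \<noteq> u" "w \<noteq> v" using uv w by auto
          then have "cr (pos u) (pos v) (pos w) \<noteq> 0" using nc uv w by auto
          then show False using vert_off z w by auto
        qed
      qed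
    qed
    then show "path_image (curve e) \<inter> pos ` V = pos ` e" using cu by simp
  next
    fix e f assume ef: "e \<in> E" "f \<in> E" "e \<noteq> f \<and> e \<inter> f \<noteq> {}"
    obtain a b where ab: "(a,b) \<in> set P" "e = {a,b}" "a < b" "a \<in> V" "b \<in> V" using edge[OF ef(1)] by auto
    obtain c d where cd: "(c,d) \<in> set P" "f = {c,d}" "c < d" "c \<in> V" "d \<in> V" using edge[OF ef(2)] by auto
    have "\<exists>x y z. e = {x,y} \<and> f = {x,z} \<and> x \<noteq> y \<and> x \<noteq> z \<and> y \<noteq> z \<and>
      x \<in> V \<and> y \<in> V \<and> z \<in> V"
    proof (cases "a = c")
      case True then show ?thesis using ab cd ef(3) by (intro exI[of _ a] exI[of _ b] exI[of _ d]) auto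
    next
      case ac: False show ?thesis
      proof (cases "a = d")
        case True then show ?thesis using ab cd ef(3) by (intro exI[of _ a] exI[of _ b] exI[of _ c]) auto
      next
        case ad: False show ?thesis
        proof (cases "b = c")
          case True then show ?thesis using ab cd ef(3) ac ad by (intro exI[of _ b] exI[of _ a] exI[of _ d]) auto
        next
          case False
          then have "b = d" using ab cd ef(3) ac ad by auto
          then show ?thesis using ab cd ef(3) ac ad by (intro exI[of _ b] exI[of _ a] exI[of _ c]) auto
        qed
      qed
    qed
    then obtain x y z where xyz: "e = {x,y}" "f = {x,z}" "x \<noteq> y" "x \<noteq> z" "y \<noteq> z"
      "x \<in> V" "y \<in> V" "z \<in> V" by blast
    have "cr (pos x) (pos y) (pos z) \<noteq> 0" using nc xyz by auto
    then have "closed_segment (pos x) (pos y) \<inter> closed_segment (pos x) (pos z) = {pos x}"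
      by (rule adj)
    moreover have "e \<inter> f = {x}" using xyz by auto
    ultimately show "path_image (curve e) \<inter> path_image (curve f) = pos ` (e \<inter> f)"
      using pi xyz by simp
  next
    fix e f assume ef: "e \<in> E" "f \<in> E" "e \<inter> f = {}"
    obtain a b where ab: "(a,b) \<in> set P" "e = {a,b}" "a < b" using edge[OF ef(1)] by auto
    obtain c d where cd: "(c,d) \<in> set P" "f = {c,d}" "c < d" using edge[OF ef(2)] by auto
    have ne4: "a \<noteq> c" "a \<noteq> d" "b \<noteq> c" "b \<noteq> d" using ab cd ef by auto
    have pie: "path_image (curve e) \<inter> path_image (curve f) = closed_segment (pos a) (pos b) \<inter> closed_segment (pos c) (pos d)"
      using pi ab cd by simp
    have "\<forall>x\<in>path_image (curve e) \<inter> path_image (curve f). \<forall>y\<in>path_image (curve e) \<inter> path_image (curve f). x = y"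
    proof -
      from dis[OF ab(1) cd(1) ne4] consider
        "closed_segment (pos a) (pos b) \<inter> closed_segment (pos c) (pos d) = {}"
        | "{a,b} = {aa,bb}" "{c,d} = {cc,dd}" | "{a,b} = {cc,dd}" "{c,d} = {aa,bb}" by blast
      then show ?thesis
      proof cases
        case 1 then show ?thesis using pie by simp
      next
        case 2
        then have "path_image (curve e) \<inter> path_image (curve f) = closed_segment (pos aa) (pos bb) \<inter> closed_segment (pos cc) (pos dd)"
          using ab cd pi aabb ccdd by simp
        then show ?thesis using S1 by simp
      next
        case 3
        then have "path_image (curve e) \<inter> path_image (curve f) = closed_segment (pos aa) (pos bb) \<inter> closed_segment (pos cc) (pos dd)"
          using ab cd pi aabb ccdd by (simp add: Int_commute)
        then show ?thesis using S1 by simp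
      qed
    qed
    from le1[OF this] show "finite (path_image (curve e) \<inter> path_image (curve f))"
      "card (path_image (curve e) \<inter> path_image (curve f)) \<le> 1" by auto
  next
    fix e assume e: "e \<in> E"
    have "{f \<in> E. crosses curve e f} \<subseteq> {if e = {aa,bb} then {cc,dd} else {aa,bb}}"
      using ccx e ne by auto
    then show "card {f \<in> E. crosses curve e f} \<le> 1"
      using card_mono[of "{if e = {aa,bb} then {cc,dd} else {aa,bb}}"] by fastforce
  qed
  moreover have "\<forall>e1\<in>E. \<forall>f1\<in>E. \<forall>e2\<in>E. \<forall>f2\<in>E.
           crosses curve e1 f1 \<and> crosses curve e2 f2 \<and> {e1, f1} \<noteq> {e2, f2} \<longrightarrow>
           (e1 \<union> f1) \<inter> (e2 \<union> f2) = {}"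
  proof (intro ballI impI)
    fix e1 f1 e2 f2 assume h: "e1 \<in> E" "f1 \<in> E" "e2 \<in> E" "f2 \<in> E"
      "crosses curve e1 f1 \<and> crosses curve e2 f2 \<and> {e1, f1} \<noteq> {e2, f2}"
    then show "(e1 \<union> f1) \<inter> (e2 \<union> f2) = {}"
      using ccx[of e1 f1] ccx[of e2 f2] by (auto simp: insert_commute)
  qed
  ultimately show ?thesis unfolding class_C0_def E_def by blast
qed


definition pos1 :: "nat \<Rightarrow> complex" where
  "pos1 v = (if v = 0 then Complex 1 10 else if v = 1 then Complex 9 0 else if v = 2 then Complex 7 6
     else if v = 3 then Complex 9 12 else if v = 4 then Complex 7 10 else Complex 6 5)"

definition pos2 :: "nat \<Rightarrow> complex" where
  "pos2 v = (if v = 0 then Complex 0 0 else if v = 1 then Complex 12 0 else if v = 2 then Complex 7 5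
     else if v = 3 then Complex 6 9 else if v = 4 then Complex 4 3 else Complex 6 2)"

definition P1 :: "(nat \<times> nat) list" where
  "P1 = [(0,1),(1,2),(0,2),(3,4),(2,3),(2,4),(2,5),(1,3),(1,4),(1,5),(0,3),(0,4),(0,5)]"

definition P2 :: "(nat \<times> nat) list" where
  "P2 = [(0,1),(1,2),(3,4),(4,5),(2,3),(2,4),(2,5),(1,3),(1,4),(1,5),(0,3),(0,4),(0,5)]"

lemma V6: "{0..5::nat} = {0,1,2,3,4,5}" by auto

lemma joinset0: "{{u, v} | u v. u \<in> A \<and> v \<in> B} = (\<Union>u\<in>A. (\<lambda>v. {u,v}) ` B)"
  by blast

lemma joinset: "{{u, v} | u v. u \<in> {0,1,2::nat} \<and> v \<in> {3,4,5}} =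
  {{2,3},{2,4},{2,5},{1,3},{1,4},{1,5},{0,3},{0,4},{0,5}}"
  unfolding joinset0 by simp

lemma E1: "join_edges {0,1,2} C3_edges {3,4,5} P2_P1_edges = (\<lambda>(u,v). {u,v}) ` set P1"
  unfolding join_edges_def joinset by (simp add: C3_edges_def P2_P1_edges_def P1_def insert_commute)

lemma E2: "join_edges {0,1,2} P3_edges_a {3,4,5} P3_edges_b = (\<lambda>(u,v). {u,v}) ` set P2"
  unfolding join_edges_def joinset by (simp add: P3_edges_a_def P3_edges_b_def P2_def insert_commute)

lemma G1: "class_C0 {0..5} (join_edges {0,1,2} C3_edges {3,4,5} P2_P1_edges)"
  unfolding E1 V6
proof (rule main[where aa=1 and bb=4 and cc=2 and dd=3])
  show "inj_on pos1 {0,1,2,3,4,5}" by (simp add: pos1_def)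
  show "\<forall>(u,v)\<in>set P1. u < v \<and> u \<in> {0,1,2,3,4,5} \<and> v \<in> {0,1,2,3,4,5}" by (simp add: P1_def)
  show "\<forall>u\<in>{0,1,2,3,4,5}. \<forall>v\<in>{0,1,2,3,4,5}. \<forall>w\<in>{0,1,2,3,4,5}.
     u \<noteq> v \<and> u \<noteq> w \<and> v \<noteq> w \<longrightarrow> cr (pos1 u) (pos1 v) (pos1 w) \<noteq> 0"
    by (simp add: pos1_def cr_def)
  show "(1::nat, 4::nat) \<in> set P1" "(2::nat, 3::nat) \<in> set P1" by (simp_all add: P1_def)
  show "(1::nat) \<noteq> 2" "(1::nat) \<noteq> 3" "(4::nat) \<noteq> 2" "(4::nat) \<noteq> 3" by simp_all
  have "Complex (15/2) (15/2) \<in> closed_segment (pos1 1) (pos1 4)"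
    unfolding in_segment by (rule exI[of _ "3/4"]) (simp add: pos1_def complex_eq_iff)
  moreover have "Complex (15/2) (15/2) \<in> closed_segment (pos1 2) (pos1 3)"
    unfolding in_segment by (rule exI[of _ "1/4"]) (simp add: pos1_def complex_eq_iff)
  ultimately show "closed_segment (pos1 1) (pos1 4) \<inter> closed_segment (pos1 2) (pos1 3) \<noteq> {}" by blast
  show "Re (pos1 4 - pos1 1) * Im (pos1 3 - pos1 2) - Im (pos1 4 - pos1 1) * Re (pos1 3 - pos1 2) \<noteq> 0"
    by (simp add: pos1_def)
  show "\<forall>(a,b)\<in>set P1. \<forall>(c,d)\<in>set P1. a \<noteq> c \<and> a \<noteq> d \<and> b \<noteq> c \<and> b \<noteq> d \<longrightarrow>
         sepT pos1 a b c d \<or> (a = 1 \<and> b = 4 \<and> c = 2 \<and> d = 3) \<or> (a = 2 \<and> b = 3 \<and> c = 1 \<and> d = 4)"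
    by (simp add: P1_def sepT_def pos1_def cr_def)
qed

lemma G2: "class_C0 {0..5} (join_edges {0,1,2} P3_edges_a {3,4,5} P3_edges_b)"
  unfolding E2 V6
proof (rule main[where aa=1 and bb=4 and cc=2 and dd=5])
  show "inj_on pos2 {0,1,2,3,4,5}" by (simp add: pos2_def)
  show "\<forall>(u,v)\<in>set P2. u < v \<and> u \<in> {0,1,2,3,4,5} \<and> v \<in> {0,1,2,3,4,5}" by (simp add: P2_def)
  show "\<forall>u\<in>{0,1,2,3,4,5}. \<forall>v\<in>{0,1,2,3,4,5}. \<forall>w\<in>{0,1,2,3,4,5}.
     u \<noteq> v \<and> u \<noteq> w \<and> v \<noteq> w \<longrightarrow> cr (pos2 u) (pos2 v) (pos2 w) \<noteq> 0"
    by (simp add: pos2_def cr_def)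
  show "(1::nat, 4::nat) \<in> set P2" "(2::nat, 5::nat) \<in> set P2" by (simp_all add: P2_def)
  show "(1::nat) \<noteq> 2" "(1::nat) \<noteq> 5" "(4::nat) \<noteq> 2" "(4::nat) \<noteq> 5" by simp_all
  have "Complex (164/27) (20/9) \<in> closed_segment (pos2 1) (pos2 4)"
    unfolding in_segment by (rule exI[of _ "20/27"]) (simp add: pos2_def complex_eq_iff)
  moreover have "Complex (164/27) (20/9) \<in> closed_segment (pos2 2) (pos2 5)"
    unfolding in_segment by (rule exI[of _ "25/27"]) (simp add: pos2_def complex_eq_iff)
  ultimately show "closed_segment (pos2 1) (pos2 4) \<inter> closed_segment (pos2 2) (pos2 5) \<noteq> {}" by blast
  show "Re (pos2 4 - pos2 1) * Im (pos2 5 - pos2 2) - Im (pos2 4 - pos2 1) * Re (pos2 5 - pos2 2) \<noteq> 0"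
    by (simp add: pos2_def)
  show "\<forall>(a,b)\<in>set P2. \<forall>(c,d)\<in>set P2. a \<noteq> c \<and> a \<noteq> d \<and> b \<noteq> c \<and> b \<noteq> d \<longrightarrow>
         sepT pos2 a b c d \<or> (a = 1 \<and> b = 4 \<and> c = 2 \<and> d = 5) \<or> (a = 2 \<and> b = 5 \<and> c = 1 \<and> d = 4)"
    by (simp add: P2_def sepT_def pos2_def cr_def)
qed

theorem lemma7:
  shows "class_C0 {0..5} (join_edges {0,1,2} C3_edges {3,4,5} P2_P1_edges)
       \<and> class_C0 {0..5} (join_edges {0,1,2} P3_edges_a {3,4,5} P3_edges_b)"
  using G1 G2 by blast

end
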